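(* Let $\alpha,\beta,\gamma\in\mathbb{R}$, and let $G_3$ be the connected, simply connected Lie group whose Lie algebra $\mathfrak{g}_3$ has a basis $\{e_1,e_2,e_3\}$ with $[e_1,e_2]=-\gamma e_3$, $[e_1,e_3]=-\beta e_2$, $[e_2,e_3]=\alpha e_1$, equipped with the left-invariant Lorentzian metric $g$ for which $\{e_1,e_2,e_3\}$ is pseudo-orthonormal with $e_3$ timelike, and with the product structure $J$. Let $\lambda_0,c\in\mathbb{R}$. Then there exists a derivation $D$ of $\mathfrak{g}_3$ with $\widetilde{\mathrm{Ric}}^1=(s^1\lambda_0+c)\mathrm{Id}+D$ (i.e. $(G_3,g,J)$ is an algebraic Schouten soliton associated to the Kobayashi–Nomizu connection $\nabla^1$) if and only if one of the following holds: (i) $\alpha=\beta=\gamma=0$ and $c\neq0$; (ii) $\alpha=0$ and $c=-\beta\gamma+\beta\gamma\lambda_0$; (iii) $\beta=0$ and $c=-\alpha\gamma+\alpha\gamma\lambda_0$; (iv) $\alpha\beta\neq0$, $\gamma=0$ and $c=0$.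
   Context: Pseudo-orthonormal means $g(e_1,e_1)=g(e_2,e_2)=1$, $g(e_3,e_3)=-1$, $g(e_i,e_j)=0$ for $i\neq j$; left-invariant tensors are identified with their values on $\mathfrak{g}$. $\nabla$ is the Levi-Civita connection of $g$. The product structure $J$ is the left-invariant endomorphism with $Je_1=e_1$, $Je_2=e_2$, $Je_3=-e_3$. The canonical connection is $\nabla^0_XY=\nabla_XY-\frac12(\nabla_XJ)JY$, and the Kobayashi–Nomizu connection is $\nabla^1_XY=\nabla^0_XY-\frac14[(\nabla_YJ)JX-(\nabla_{JY}J)X]$. For $k=0,1$: $R^k(X,Y)Z=\nabla^k_X\nabla^k_YZ-\nabla^k_Y\nabla^k_XZ-\nabla^k_{[X,Y]}Z$; $\rho^k(X,Y)=-g(R^k(X,e_1)Y,e_1)-g(R^k(X,e_2)Y,e_2)+g(R^k(X,e_3)Y,e_3)$; $\widetilde\rho^k(X,Y)=\frac12(\rho^k(X,Y)+\rho^k(Y,X))$; $\widetilde{\mathrm{Ric}}^k$ is defined by $\widetilde\rho^k(X,Y)=g(\widetilde{\mathrm{Ric}}^k(X),Y)$; and $s^k=\widetilde\rho^k(e_1,e_1)+\widetilde\rho^k(e_2,e_2)-\widetilde\rho^k(e_3,e_3)$. A derivation of $\mathfrak{g}$ is a linear map $D$ with $D[X,Y]=[DX,Y]+[X,DY]$. $(G,g,J)$ is an algebraic Schouten soliton associated to $\nabla^k$ (with real constants $\lambda_0,c$) if $\widetilde{\mathrm{Ric}}^k=(s^k\lambda_0+c)\mathrm{Id}+D$ for some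 derivation $D$. *)

theory Defs
  imports "HOL-Analysis.Analysis"
begin

text \<open>The Lie algebra g3 is modelled as real^3 with coordinates w.r.t. the basis e1,e2,e3.\<close>

type_synonym vec3 = "real^3"

definition e1 :: vec3 where "e1 = axis 1 1"
definition e2 :: vec3 where "e2 = axis 2 1"
definition e3 :: vec3 where "e3 = axis 3 1"

text \<open>Lie bracket: [e1,e2] = -ga e3, [e1,e3] = -be e2, [e2,e3] = al e1, extended bilinearly.\<close>
definition brk :: "real \<Rightarrow> real \<Rightarrow> real \<Rightarrow> vec3 \<Rightarrow> vec3 \<Rightarrow> vec3" where
  "brk al be ga X Y = vector
     [ al * (X$2 * Y$3 - X$3 * Y$2),
       - be * (X$1 * Y$3 - X$3 * Y$1),
       - ga * (X$1 * Y$2 - X$2 * Y$1) ]"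

definition gL :: "vec3 \<Rightarrow> vec3 \<Rightarrow> real" where
  "gL X Y = X$1 * Y$1 + X$2 * Y$2 - X$3 * Y$3"

definition Jp :: "vec3 \<Rightarrow> vec3" where
  "Jp X = vector [X$1, X$2, - X$3]"

text \<open>Levi-Civita connection of the left-invariant metric (Koszul formula).\<close>
definition LC :: "real \<Rightarrow> real \<Rightarrow> real \<Rightarrow> vec3 \<Rightarrow> vec3 \<Rightarrow> vec3" where
  "LC al be ga X Y = (THE Z. \<forall>W. 2 * gL Z W =
       gL (brk al be ga X Y) W - gL (brk al be ga Y W) X + gL (brk al be ga W X) Y)"

definition nablaJ :: "real \<Rightarrow> real \<Rightarrow> real \<Rightarrow> vec3 \<Rightarrow> vec3 \<Rightarrow> vec3" where
  "nablaJ al be ga X Y = LC al be ga X (Jp Y) - Jp (LC al be ga X Y)"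

definition nabla0 :: "real \<Rightarrow> real \<Rightarrow> real \<Rightarrow> vec3 \<Rightarrow> vec3 \<Rightarrow> vec3" where
  "nabla0 al be ga X Y = LC al be ga X Y - (1/2) *\<^sub>R nablaJ al be ga X (Jp Y)"

definition nabla1 :: "real \<Rightarrow> real \<Rightarrow> real \<Rightarrow> vec3 \<Rightarrow> vec3 \<Rightarrow> vec3" where
  "nabla1 al be ga X Y = nabla0 al be ga X Y
      - (1/4) *\<^sub>R (nablaJ al be ga Y (Jp X) - nablaJ al be ga (Jp Y) X)"

definition curv :: "(vec3 \<Rightarrow> vec3 \<Rightarrow> vec3) \<Rightarrow> (vec3 \<Rightarrow> vec3 \<Rightarrow> vec3)
    \<Rightarrow> vec3 \<Rightarrow> vec3 \<Rightarrow> vec3 \<Rightarrow> vec3" where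
  "curv br nab X Y Z = nab X (nab Y Z) - nab Y (nab X Z) - nab (br X Y) Z"

definition ricci :: "(vec3 \<Rightarrow> vec3 \<Rightarrow> vec3) \<Rightarrow> (vec3 \<Rightarrow> vec3 \<Rightarrow> vec3)
    \<Rightarrow> vec3 \<Rightarrow> vec3 \<Rightarrow> real" where
  "ricci br nab X Y = - gL (curv br nab X e1 Y) e1 - gL (curv br nab X e2 Y) e2
                      + gL (curv br nab X e3 Y) e3"

definition sricci :: "(vec3 \<Rightarrow> vec3 \<Rightarrow> vec3) \<Rightarrow> (vec3 \<Rightarrow> vec3 \<Rightarrow> vec3)
    \<Rightarrow> vec3 \<Rightarrow> vec3 \<Rightarrow> real" where
  "sricci br nab X Y = (ricci br nab X Y + ricci br nab Y X) / 2"

definition RicOp :: "(vec3 \<Rightarrow> vec3 \<Rightarrow> vec3) \<Rightarrow> (vec3 \<Rightarrow> vec3 \<Rightarrow> vec3) \<Rightarrow> vec3 \<Rightarrow> vec3" where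
  "RicOp br nab X = (THE Z. \<forall>Y. gL Z Y = sricci br nab X Y)"

definition scal :: "(vec3 \<Rightarrow> vec3 \<Rightarrow> vec3) \<Rightarrow> (vec3 \<Rightarrow> vec3 \<Rightarrow> vec3) \<Rightarrow> real" where
  "scal br nab = sricci br nab e1 e1 + sricci br nab e2 e2 - sricci br nab e3 e3"

definition is_derivation :: "(vec3 \<Rightarrow> vec3 \<Rightarrow> vec3) \<Rightarrow> (vec3 \<Rightarrow> vec3) \<Rightarrow> bool" where
  "is_derivation br D \<longleftrightarrow> linear D \<and> (\<forall>X Y. D (br X Y) = br (D X) Y + br X (D Y))"

definition schouten_soliton :: "(vec3 \<Rightarrow> vec3 \<Rightarrow> vec3) \<Rightarrow> (vec3 \<Rightarrow> vec3 \<Rightarrow> vec3)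
    \<Rightarrow> real \<Rightarrow> real \<Rightarrow> bool" where
  "schouten_soliton br nab lam0 c \<longleftrightarrow>
     (\<exists>D. is_derivation br D \<and>
          (\<forall>X. RicOp br nab X = (scal br nab * lam0 + c) *\<^sub>R X + D X))"

end

theory Submission
  imports Defs
begin

lemma gL_unique:
  assumes "\<forall>W. gL Z W = gL Z' W" shows "Z = Z'"
proof -
  have "gL Z (axis i 1) = gL Z' (axis i 1)" for i using assms by blast
  then have "Z$1 = Z'$1" "Z$2 = Z'$2" "Z$3 = Z'$3"
    using spec[OF assms, of e1] spec[OF assms, of e2] spec[OF assms, of e3]
    by (simp_all add: gL_def e1_def e2_def e3_def axis_def)
  then show ?thesis by (simp add: vec_eq_iff forall_3)
qed

lemma LC_eq: "LC al be ga X Y = vector [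
  ((al - be + ga)*X$2*Y$3 + (-al - be + ga)*X$3*Y$2)/2,
  ((al - be - ga)*X$1*Y$3 + (al + be - ga)*X$3*Y$1)/2,
  ((al - be - ga)*X$1*Y$2 + (al - be + ga)*X$2*Y$1)/2]" (is "_ = ?Z")
proof -
  have P: "\<forall>W. 2 * gL ?Z W =
       gL (brk al be ga X Y) W - gL (brk al be ga Y W) X + gL (brk al be ga W X) Y"
    unfolding gL_def brk_def vector_3 apply (intro allI) by (simp add: field_simps)
  show ?thesis unfolding LC_def
  proof (rule the_equality)
    show "\<forall>W. 2 * gL ?Z W =
       gL (brk al be ga X Y) W - gL (brk al be ga Y W) X + gL (brk al be ga W X) Y" by (rule P)
  next
    fix Z assume H: "\<forall>W. 2 * gL Z W =
       gL (brk al be ga X Y) W - gL (brk al be ga Y W) X + gL (brk al be ga W X) Y"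
    have "\<forall>W. gL Z W = gL ?Z W"
    proof
      fix W show "gL Z W = gL ?Z W" using spec[OF H, of W] spec[OF P, of W] by linarith
    qed
    then show "Z = ?Z" by (rule gL_unique)
  qed
qed

lemma LC_c: "LC al be ga X Y $ 1 = ((al - be + ga)*X$2*Y$3 + (-al - be + ga)*X$3*Y$2)/2"
  "LC al be ga X Y $ 2 = ((al - be - ga)*X$1*Y$3 + (al + be - ga)*X$3*Y$1)/2"
  "LC al be ga X Y $ 3 = ((al - be - ga)*X$1*Y$2 + (al - be + ga)*X$2*Y$1)/2"
  by (simp_all only: LC_eq vector_3)

lemma Jp_c: "Jp X $ 1 = X$1" "Jp X $ 2 = X$2" "Jp X $ 3 = - X$3"
  by (simp_all only: Jp_def vector_3)

lemma nJ_eq: "nablaJ al be ga X Y = vector [(be-al-ga)*X$2*Y$3, (be-al+ga)*X$1*Y$3,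
   (al-be-ga)*X$1*Y$2 + (al-be+ga)*X$2*Y$1]"
  unfolding nablaJ_def vec_eq_iff forall_3
  by (simp only: vector_3 vector_minus_component LC_c Jp_c) (simp add: field_simps)

lemma n0_eq: "nabla0 al be ga X Y = vector [(ga-al-be)/2*X$3*Y$2, (al+be-ga)/2*X$3*Y$1, 0]"
  unfolding nabla0_def vec_eq_iff forall_3
  by (simp only: vector_3 vector_minus_component vector_scaleR_component nJ_eq LC_c Jp_c) (simp add: field_simps)

lemma n1_eq: "nabla1 al be ga X Y = vector [- al * X$3 * Y$2, be * X$3 * Y$1, 0]"
  unfolding nabla1_def vec_eq_iff forall_3
  by (simp only: vector_3 vector_minus_component vector_scaleR_component nJ_eq n0_eq Jp_c) (simp add: field_simps)

lemma sricci_eq: "sricci (brk al be ga) (nabla1 al be ga) X Y = - be*ga*X$1*Y$1 - al*ga*X$2*Y$2"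
  by (simp add: sricci_def ricci_def curv_def n1_eq brk_def gL_def e1_def e2_def e3_def axis_def
      algebra_simps; simp add: field_simps)

lemma RicOp_eq: "RicOp (brk al be ga) (nabla1 al be ga) X = vector [- be*ga*X$1, - al*ga*X$2, 0]"
  (is "_ = ?Z")
proof -
  have P: "\<forall>Y. gL ?Z Y = sricci (brk al be ga) (nabla1 al be ga) X Y"
    by (simp add: sricci_eq gL_def)
  show ?thesis unfolding RicOp_def
  proof (rule the_equality)
    show "\<forall>Y. gL ?Z Y = sricci (brk al be ga) (nabla1 al be ga) X Y" by (rule P)
  next
    fix Z assume H: "\<forall>Y. gL Z Y = sricci (brk al be ga) (nabla1 al be ga) X Y"
    have "\<forall>W. gL Z W = gL ?Z W" using H P by simp
    then show "Z = ?Z" by (rule gL_unique)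
  qed
qed

lemma scal_eq: "scal (brk al be ga) (nabla1 al be ga) = - be*ga - al*ga"
  by (simp add: scal_def sricci_eq e1_def e2_def e3_def axis_def)

lemma lin3: "linear (\<lambda>X::vec3. vector [p * X$1, q * X$2, r * X$3] :: vec3)"
  by (rule linearI) (simp_all add: vec_eq_iff forall_3 algebra_simps)

lemma deriv_iff:
  "is_derivation (brk al be ga) (\<lambda>X. vector [d1 * X$1, d2 * X$2, d3 * X$3]) \<longleftrightarrow>
    (ga*(d1+d2-d3) = 0 \<and> be*(d1+d3-d2) = 0 \<and> al*(d2+d3-d1) = 0)"
proof
  assume H: "is_derivation (brk al be ga) (\<lambda>X. vector [d1 * X$1, d2 * X$2, d3 * X$3])"
  then have B: "\<And>X Y. (\<lambda>X. vector [d1 * X$1, d2 * X$2, d3 * X$3] :: vec3) (brk al be ga X Y) =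
     brk al be ga (vector [d1 * X$1, d2 * X$2, d3 * X$3]) Y + brk al be ga X (vector [d1 * Y$1, d2 * Y$2, d3 * Y$3])"
    unfolding is_derivation_def by blast
  have 1: "ga*(d1+d2-d3) = 0" using arg_cong[OF B[of e1 e2], of "\<lambda>v. v$3"]
    by (simp add: brk_def e1_def e2_def axis_def algebra_simps)
  have 2: "be*(d1+d3-d2) = 0" using arg_cong[OF B[of e1 e3], of "\<lambda>v. v$2"]
    by (simp add: brk_def e1_def e3_def axis_def algebra_simps)
  have 3: "al*(d2+d3-d1) = 0" using arg_cong[OF B[of e2 e3], of "\<lambda>v. v$1"]
    by (simp add: brk_def e2_def e3_def axis_def algebra_simps)
  show "ga*(d1+d2-d3) = 0 \<and> be*(d1+d3-d2) = 0 \<and> al*(d2+d3-d1) = 0" using 1 2 3 by blast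
next
  assume H: "ga*(d1+d2-d3) = 0 \<and> be*(d1+d3-d2) = 0 \<and> al*(d2+d3-d1) = 0"
  have "(vector [d1 * (brk al be ga X Y)$1, d2 * (brk al be ga X Y)$2, d3 * (brk al be ga X Y)$3] :: vec3) =
     brk al be ga (vector [d1 * X$1, d2 * X$2, d3 * X$3]) Y + brk al be ga X (vector [d1 * Y$1, d2 * Y$2, d3 * Y$3])"
    for X Y
  proof -
    have a: "al*d1 = al*(d2+d3)" "be*d2 = be*(d1+d3)" "ga*d3 = ga*(d1+d2)" using H by (simp_all add: algebra_simps)
    show ?thesis
      unfolding vec_eq_iff forall_3
      apply (simp only: vector_3 brk_def vector_add_component)
      apply (intro conjI)
      using a by algebra+
  qed
  then show "is_derivation (brk al be ga) (\<lambda>X. vector [d1 * X$1, d2 * X$2, d3 * X$3])"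
    unfolding is_derivation_def using lin3 by blast
qed

lemma arith_final:
  fixes al be ga lam0 c k :: real
  assumes k: "k = (- be*ga - al*ga) * lam0 + c"
  shows "(ga*(k+al*ga+be*ga) = 0 \<and> be*(k+be*ga-al*ga) = 0 \<and> al*(k+al*ga-be*ga) = 0) \<longleftrightarrow>
    ((al = 0 \<and> be = 0 \<and> ga = 0 \<and> c \<noteq> 0) \<or>
     (al = 0 \<and> c = - be * ga + be * ga * lam0) \<or>
     (be = 0 \<and> c = - al * ga + al * ga * lam0) \<or>
     (al * be \<noteq> 0 \<and> ga = 0 \<and> c = 0))"
proof -
  have c: "c = k + be*ga*lam0 + al*ga*lam0" using k by (simp add: algebra_simps)
  show ?thesis
  proof (cases "al=0 \<or> be = 0 \<or> ga = 0")
    case True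
    then show ?thesis by (cases "al=0"; cases "be=0"; cases "ga=0") (auto simp: mult_eq_0_iff c)
  next
    case False
    then have n: "al*ga \<noteq> 0" by simp
    show ?thesis unfolding c using False by (simp add: mult_eq_0_iff) (use n in linarith)
  qed
qed
theorem theorem4p7:
  fixes al be ga lam0 c :: real
  shows "schouten_soliton (brk al be ga) (nabla1 al be ga) lam0 c \<longleftrightarrow>
    ((al = 0 \<and> be = 0 \<and> ga = 0 \<and> c \<noteq> 0) \<or>
     (al = 0 \<and> c = - be * ga + be * ga * lam0) \<or>
     (be = 0 \<and> c = - al * ga + al * ga * lam0) \<or>
     (al * be \<noteq> 0 \<and> ga = 0 \<and> c = 0))"
proof -
  define k where "k = scal (brk al be ga) (nabla1 al be ga) * lam0 + c"
  have kk: "k = (- be*ga - al*ga) * lam0 + c" by (simp add: k_def scal_eq)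
  have D0: "(\<lambda>X. RicOp (brk al be ga) (nabla1 al be ga) X - k *\<^sub>R X) =
     (\<lambda>X. vector [(-be*ga-k)*X$1, (-al*ga-k)*X$2, (-k)*X$3])"
    by (simp add: RicOp_eq fun_eq_iff vec_eq_iff forall_3 algebra_simps)
  have S: "schouten_soliton (brk al be ga) (nabla1 al be ga) lam0 c \<longleftrightarrow>
     is_derivation (brk al be ga) (\<lambda>X. RicOp (brk al be ga) (nabla1 al be ga) X - k *\<^sub>R X)"
    unfolding schouten_soliton_def k_def[symmetric]
  proof
    assume "\<exists>D. is_derivation (brk al be ga) D \<and>
        (\<forall>X. RicOp (brk al be ga) (nabla1 al be ga) X = k *\<^sub>R X + D X)"
    then obtain D where D: "is_derivation (brk al be ga) D"
      "\<forall>X. RicOp (brk al be ga) (nabla1 al be ga) X = k *\<^sub>R X + D X" by blast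
    have "(\<lambda>X. RicOp (brk al be ga) (nabla1 al be ga) X - k *\<^sub>R X) = D"
      using D(2) by (simp add: fun_eq_iff)
    then show "is_derivation (brk al be ga) (\<lambda>X. RicOp (brk al be ga) (nabla1 al be ga) X - k *\<^sub>R X)"
      using D(1) by simp
  next
    assume "is_derivation (brk al be ga) (\<lambda>X. RicOp (brk al be ga) (nabla1 al be ga) X - k *\<^sub>R X)"
    then show "\<exists>D. is_derivation (brk al be ga) D \<and>
        (\<forall>X. RicOp (brk al be ga) (nabla1 al be ga) X = k *\<^sub>R X + D X)"
      by (intro exI[of _ "\<lambda>X. RicOp (brk al be ga) (nabla1 al be ga) X - k *\<^sub>R X"]) simp
  qed
  have E: "(ga*((-be*ga-k)+(-al*ga-k)-(-k)) = 0 \<and> be*((-be*ga-k)+(-k)-(-al*ga-k)) = 0 \<and>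
      al*((-al*ga-k)+(-k)-(-be*ga-k)) = 0) \<longleftrightarrow>
    (ga*(k+al*ga+be*ga) = 0 \<and> be*(k+be*ga-al*ga) = 0 \<and> al*(k+al*ga-be*ga) = 0)"
  proof -
    have x1: "(-be*ga-k)+(-al*ga-k)-(-k) = -(k+al*ga+be*ga)" by linarith
    have x2: "(-be*ga-k)+(-k)-(-al*ga-k) = -(k+be*ga-al*ga)" by linarith
    have x3: "(-al*ga-k)+(-k)-(-be*ga-k) = -(k+al*ga-be*ga)" by linarith
    show ?thesis by (simp only: x1 x2 x3 mult_minus_right neg_equal_0_iff_equal)
  qed
  show ?thesis
    by (simp only: S D0 deriv_iff E arith_final[OF kk])
qed

end
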